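(* Let $B_1,B_2$ be compact curves of genus at least two, let $g$ be the genus of $B_2$, and let $\mathcal A=(D_1\cup\dots\cup D_m,d,\{(t_i,r_i,n_i)\}_{i=1}^m)$ be a simple Galois admissible configuration for $B_1\times B_2$. If $m\le3(g-1)$, then $\nu(\mathcal A)\le2+\frac23$, with equality if and only if $m=3(g-1)$ and $r_i=3$ for all $i$.
   Context: A simple Galois admissible configuration for $B_1\times B_2$ consists of: pairwise disjoint curves $D_1,\dots,D_m\subset B_1\times B_2$, each the graph of an étale map $B_1\to B_2$; a positive integer $d$; and for each $i$ positive integers $t_i,n_i$ and $r_i\ge2$ with $d=t_in_ir_i$. Its abstract slope is $$\nu(\mathcal A)=2+\frac{-\sum_{i=1}^m t_in_i\frac{(r_i-1)(r_i+1)}{r_i}e(D_i)}{d\,e(B_1\times B_2)-\sum_{i=1}^m\beta_ie(D_i)},\qquad \beta_i=t_in_i(r_i-1),$$ where $e$ denotes topological Euler characteristic; equivalently $\nu(\mathcal A)=2+\dfrac{1-\frac1m\sum_i r_i^{-2}}{\frac{2g-2}{m}+1-\frac1m\sum_i r_i^{-1}}$. *)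

theory Defs
  imports Complex_Main
begin

definition euler_curve :: "nat \<Rightarrow> real" where
  "euler_curve g = 2 - 2 * real g"

text \<open>Numerical data of a simple Galois admissible configuration for B1 x B2,
  with B1 of genus g1 and B2 of genus g2; curves D_i (i < m) are graphs of maps
  B1 -> B2, hence isomorphic to B1, so e(D_i) = e(B1); e(B1 x B2) = e(B1) e(B2).\<close>
definition sgac_data ::
  "nat \<Rightarrow> nat \<Rightarrow> nat \<Rightarrow> nat \<Rightarrow> (nat \<Rightarrow> nat) \<Rightarrow> (nat \<Rightarrow> nat) \<Rightarrow> (nat \<Rightarrow> nat) \<Rightarrow> bool" where
  "sgac_data g1 g2 m d t n r \<longleftrightarrow> m \<ge> 1 \<and> d > 0 \<and>
     (\<forall>i<m. t i > 0 \<and> n i > 0 \<and> r i \<ge> 2 \<and> d = t i * n i * r i)"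

definition abstract_slope ::
  "nat \<Rightarrow> nat \<Rightarrow> nat \<Rightarrow> nat \<Rightarrow> (nat \<Rightarrow> nat) \<Rightarrow> (nat \<Rightarrow> nat) \<Rightarrow> (nat \<Rightarrow> nat) \<Rightarrow> real" where
  "abstract_slope g1 g2 m d t n r =
     2 + (- (\<Sum>i<m. real (t i * n i) * ((real (r i) - 1) * (real (r i) + 1) / real (r i))
                      * euler_curve g1))
       / (real d * (euler_curve g1 * euler_curve g2)
          - (\<Sum>i<m. real (t i * n i) * (real (r i) - 1) * euler_curve g1))"

end

theory Submission
  imports Defs
begin

lemma term_num:
  assumes "d = t * n * r" "r \<ge> 2"
  shows "real (t * n) * ((real r - 1) * (real r + 1) / real r) * e
         = real d * e * (1 - 1 / (real r)^2)"
proof -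
  have r0: "real r > 0" using assms by simp
  have "real d = real (t*n) * real r" using assms(1) by simp
  thus ?thesis using r0 by (simp add: field_simps power2_eq_square)
qed

lemma term_den:
  assumes "d = t * n * r" "r \<ge> 2"
  shows "real (t * n) * (real r - 1) * e = real d * e * (1 - 1 / real r)"
proof -
  have r0: "real r > 0" using assms by simp
  have "real d = real (t*n) * real r" using assms(1) by simp
  thus ?thesis using r0 by (simp add: field_simps)
qed

lemma f_bound:
  assumes "(r::nat) \<ge> 2"
  shows "4/3 - (3 * (1 - 1 / (real r)^2) - 2 * (1 - 1 / real r)) = (real r - 3)^2 / (3 * (real r)^2)"
proof -
  have r0: "real r > 0" using assms by simp
  thus ?thesis by (simp add: field_simps power2_eq_square)
qed

theorem proposition5p6:
  fixes g1 g m d :: nat and t n r :: "nat \<Rightarrow> nat"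
  assumes "g1 \<ge> 2" and "g \<ge> 2"
    and "sgac_data g1 g m d t n r"
    and "m \<le> 3 * (g - 1)"
  shows "abstract_slope g1 g m d t n r \<le> 2 + 2 / 3 \<and>
         (abstract_slope g1 g m d t n r = 2 + 2 / 3 \<longleftrightarrow>
           (m = 3 * (g - 1) \<and> (\<forall>i<m. r i = 3)))"
proof -
  have D: "m \<ge> 1" "d > 0" "\<And>i. i<m \<Longrightarrow> t i > 0 \<and> n i > 0 \<and> r i \<ge> 2 \<and> d = t i * n i * r i"
    using assms(3) unfolding sgac_data_def by auto
  define e1 where "e1 = euler_curve g1"
  define e2 where "e2 = euler_curve g"
  define S where "S = (\<Sum>i<m. 1 - 1 / (real (r i))^2)"
  define T where "T = (\<Sum>i<m. 1 - 1 / real (r i))"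
  define h where "h = (\<lambda>i. (real (r i) - 3)^2 / (3 * (real (r i))^2))"
  have e1n: "e1 < 0" using assms(1) unfolding e1_def euler_curve_def by simp
  have e2v: "e2 = - 2 * (real g - 1)" unfolding e2_def euler_curve_def by simp
  have T0: "T \<ge> 0" unfolding T_def
  proof (rule sum_nonneg)
    fix i assume "i \<in> {..<m}"
    hence "real (r i) \<ge> 1" using D(3) by force
    thus "1 - 1 / real (r i) \<ge> 0" by (simp add: field_simps)
  qed
  have num: "(\<Sum>i<m. real (t i * n i) * ((real (r i) - 1) * (real (r i) + 1) / real (r i)) * e1)
      = real d * e1 * S"
    unfolding S_def sum_distrib_left by (rule sum.cong) (use D(3) term_num in auto)
  have den: "(\<Sum>i<m. real (t i * n i) * (real (r i) - 1) * e1) = real d * e1 * T"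
    unfolding T_def sum_distrib_left by (rule sum.cong) (use D(3) term_den in auto)
  define P where "P = 2 * (real g - 1) + T"
  have P0: "P > 0" unfolding P_def using T0 assms(2) by simp
  have dpos: "real d > 0" using D(2) by simp
  have slope: "abstract_slope g1 g m d t n r = 2 + S / P"
  proof -
    have "abstract_slope g1 g m d t n r = 2 + (- (real d * e1 * S)) / (real d * (e1 * e2) - real d * e1 * T)"
      unfolding abstract_slope_def using num den e1_def e2_def by simp
    also have "real d * (e1 * e2) - real d * e1 * T = - (real d * e1) * P"
      unfolding P_def e2v by (simp add: algebra_simps)
    also have "(- (real d * e1 * S)) / (- (real d * e1) * P) = S / P"
      using e1n dpos by simp
    finally show ?thesis .
  qed
  have key: "3 * S - 2 * T = 4 / 3 * real m - (\<Sum>i<m. h i)"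
  proof -
    have "3 * S - 2 * T = (\<Sum>i<m. 3 * (1 - 1 / (real (r i))^2) - 2 * (1 - 1 / real (r i)))"
      unfolding S_def T_def sum_distrib_left sum_subtractf[symmetric] by simp
    also have "\<dots> = (\<Sum>i<m. 4/3 - h i)"
    proof (rule sum.cong)
      fix i assume "i \<in> {..<m}"
      hence "r i \<ge> 2" using D(3) by force
      from f_bound[OF this] show "3 * (1 - 1 / (real (r i))^2) - 2 * (1 - 1 / real (r i)) = 4/3 - h i"
        unfolding h_def by linarith
    qed simp
    also have "\<dots> = 4 / 3 * real m - (\<Sum>i<m. h i)"
      by (simp add: sum_subtractf)
    finally show ?thesis .
  qed
  have h0: "\<And>i. h i \<ge> 0" unfolding h_def by simp
  have H0: "(\<Sum>i<m. h i) \<ge> 0" by (rule sum_nonneg) (use h0 in auto)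
  have gg: "real (g - 1) = real g - 1" using assms(2) by (simp add: of_nat_diff)
  have mg: "real m \<le> 3 * (real g - 1)"
  proof -
    have "real m \<le> real (3 * (g - 1))" using assms(4) by (simp only: of_nat_le_iff)
    thus ?thesis using gg by simp
  qed
  have iff1: "S / P \<le> 2/3 \<longleftrightarrow> 3 * S \<le> 2 * P" using P0 by (simp add: field_simps)
  have iff2: "S / P = 2/3 \<longleftrightarrow> 3 * S = 2 * P" using P0 by (simp add: field_simps)
  have key': "3 * S - 2 * P = (4 * real m - 12 * (real g - 1)) / 3 - (\<Sum>i<m. h i)"
    using key unfolding P_def by (simp add: field_simps)
  have q: "(4 * real m - 12 * (real g - 1)) / 3 \<le> 0" using mg by simp
  have q2: "(4 * real m - 12 * (real g - 1)) / 3 = 0 \<longleftrightarrow> real m = 3 * (real g - 1)" by (simp, rule iffI; linarith)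
  have le: "3 * S \<le> 2 * P" using key' H0 q by linarith
  have eq: "3 * S = 2 * P \<longleftrightarrow> real m = 3 * (real g - 1) \<and> (\<Sum>i<m. h i) = 0"
    using key' H0 q q2 by linarith
  have hz: "(\<Sum>i<m. h i) = 0 \<longleftrightarrow> (\<forall>i<m. r i = 3)"
  proof -
    have "(\<Sum>i<m. h i) = 0 \<longleftrightarrow> (\<forall>i\<in>{..<m}. h i = 0)"
      by (rule sum_nonneg_eq_0_iff) (use h0 in auto)
    moreover have "\<And>i. i < m \<Longrightarrow> h i = 0 \<longleftrightarrow> r i = 3"
    proof -
      fix i assume "i < m"
      hence "r i \<ge> 2" using D(3) by force
      hence "real (r i) \<noteq> 0" by simp
      thus "h i = 0 \<longleftrightarrow> r i = 3" unfolding h_def by simp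
    qed
    ultimately show ?thesis by auto
  qed
  have mm: "real m = 3 * (real g - 1) \<longleftrightarrow> m = 3 * (g - 1)"
  proof -
    have "real m = 3 * (real g - 1) \<longleftrightarrow> real m = real (3 * (g - 1))" using gg by simp
    also have "\<dots> \<longleftrightarrow> m = 3 * (g - 1)" by (simp only: of_nat_eq_iff)
    finally show ?thesis .
  qed
  show ?thesis
    unfolding slope using le eq hz mm iff1 iff2 by auto
qed

end
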